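(* Let $a, b, n$ be positive integers with $b>1$, $n>1$ and $\gcd(r_b(n),a)=1$, and for $i = 2,\ldots,n$ set $\alpha_i := a_i + \sum_{j=i}^n (b-1)\, a_j$. Then: (a) $\alpha_i \in \operatorname{Ap}(S_a(b,n))$ for every $i = 2,\ldots,n$; (b) if $a < b^n - 1$ then $\alpha_2 > \alpha_3 > \cdots > \alpha_n$, and if $a > b^n-1$ then $\alpha_2 < \alpha_3 < \cdots < \alpha_n$; (c) for every $\omega \in \operatorname{Ap}(S_a(b,n))$ there exists $i \in \{2,\ldots,n\}$ such that $\omega \le \alpha_i$.
   Context: For $\ell \ge 1$, $r_b(\ell) = \sum_{j=0}^{\ell-1} b^j$, and $r_b(0)=0$. For $i \ge 1$, $a_i := r_b(n) + a\, r_b(i-1)$; $S_a(b,n)$ is the numerical semigroup generated by $\{a_i\}$, with multiplicity $a_1$. $\operatorname{Ap}(S_a(b,n)) = \{\omega \in S_a(b,n) : \omega - a_1 \notin S_a(b,n)\}$. *)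

theory Defs
  imports Main
begin

definition repunit :: "nat \<Rightarrow> nat \<Rightarrow> nat" where
  "repunit b l = (\<Sum>j<l. b ^ j)"

definition gen :: "nat \<Rightarrow> nat \<Rightarrow> nat \<Rightarrow> nat \<Rightarrow> nat" where
  "gen a b n i = repunit b n + a * repunit b (i - 1)"

inductive_set Ssg :: "nat \<Rightarrow> nat \<Rightarrow> nat \<Rightarrow> nat set" for a b n where
  zero: "0 \<in> Ssg a b n"
| step: "i \<ge> 1 \<Longrightarrow> x \<in> Ssg a b n \<Longrightarrow> gen a b n i + x \<in> Ssg a b n"

definition Apery :: "nat \<Rightarrow> nat \<Rightarrow> nat \<Rightarrow> nat set" where
  "Apery a b n = {w \<in> Ssg a b n. \<not> (w \<ge> gen a b n 1 \<and> w - gen a b n 1 \<in> Ssg a b n)}"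

definition alpha :: "nat \<Rightarrow> nat \<Rightarrow> nat \<Rightarrow> nat \<Rightarrow> nat" where
  "alpha a b n i = gen a b n i + (\<Sum>j=i..n. (b - 1) * gen a b n j)"

end

theory Submission imports Defs "HOL-Number_Theory.Cong" begin

lemma repunit_0[simp]: "repunit b 0 = 0" by (simp add: repunit_def)

lemma repunit_Suc: "repunit b (Suc k) = b * repunit b k + 1"
proof (induction k)
  case 0 then show ?case by (simp add: repunit_def)
next
  case (Suc k)
  have e1: "repunit b (Suc m) = repunit b m + b ^ m" for m by (simp add: repunit_def)
  have "repunit b (Suc (Suc k)) = repunit b (Suc k) + b^(Suc k)" by (rule e1)
  also have "\<dots> = b*repunit b k + 1 + b * b^k" using Suc.IH by simp
  also have "\<dots> = b*(repunit b k + b^k) + 1" by (simp add: algebra_simps)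
  also have "\<dots> = b*repunit b (Suc k) + 1" by (simp only: e1)
  finally show ?case .
qed

lemma repunit_add: "repunit b (n + k) = repunit b k + b ^ k * repunit b n"
  by (induction k) (simp_all add: repunit_Suc algebra_simps)

lemma repunit_geom: "b \<ge> 1 \<Longrightarrow> repunit b n * (b - 1) + 1 = b ^ n"
proof (induction n)
  case 0 then show ?case by simp
next
  case (Suc n)
  have "repunit b (Suc n) * (b - 1) + 1 = b * (repunit b n * (b - 1) + 1) - b + (b - 1) + 1"
    using Suc.prems by (simp add: repunit_Suc algebra_simps)
  also have "\<dots> = b ^ Suc n" using Suc by simp
  finally show ?case .
qed

lemma repunit_pos: "m \<ge> 1 \<Longrightarrow> repunit b m \<ge> 1"
  by (cases m) (auto simp: repunit_Suc)

lemma gen_1: "gen a b n 1 = repunit b n" by (simp add: gen_def)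

lemma gen_big: "j > n \<Longrightarrow> gen a b n j = gen a b n (j - n) + (a * b ^ (j - n - 1)) * gen a b n 1"
proof -
  assume "j > n"
  then have "j - 1 = n + (j - n - 1)" by simp
  then have "repunit b (j - 1) = repunit b (j - n - 1) + b ^ (j - n - 1) * repunit b n"
    by (metis repunit_add)
  then show ?thesis by (simp add: gen_def algebra_simps)
qed

lemma gen_rel: "i \<ge> 2 \<Longrightarrow> j \<ge> 1 \<Longrightarrow> b * gen a b n j + gen a b n i = b * gen a b n (i - 1) + gen a b n (j + 1)"
proof -
  assume "i \<ge> 2" and j1: "j \<ge> 1"
  then have "i - 1 = Suc (i - 2)" by simp
  then have "repunit b (i - 1) = b * repunit b (i - 1 - 1) + 1" by (simp add: repunit_Suc)
  then show ?thesis using j1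
    by (cases j) (auto simp: gen_def algebra_simps repunit_Suc)
qed

lemma Ssg_add: "x \<in> Ssg a b n \<Longrightarrow> y \<in> Ssg a b n \<Longrightarrow> x + y \<in> Ssg a b n"
  by (induction x rule: Ssg.induct) (auto simp: add.assoc intro: Ssg.step)

lemma gen_in: "i \<ge> 1 \<Longrightarrow> gen a b n i \<in> Ssg a b n"
  using Ssg.step[OF _ Ssg.zero] by fastforce

lemma mult_in: "x \<in> Ssg a b n \<Longrightarrow> k * x \<in> Ssg a b n"
  by (induction k) (auto intro: Ssg.zero Ssg_add)

lemma sum_in: "finite A \<Longrightarrow> (\<And>j. j \<in> A \<Longrightarrow> f j \<in> Ssg a b n) \<Longrightarrow> sum f A \<in> Ssg a b n"
  by (induction A rule: finite_induct) (auto intro: Ssg.zero Ssg_add)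

lemma Ssg_mset: "w \<in> Ssg a b n \<Longrightarrow> \<exists>M. (\<forall>j\<in>#M. j \<ge> 1) \<and> w = sum_mset (image_mset (gen a b n) M)"
proof (induction w rule: Ssg.induct)
  case zero then show ?case by (intro exI[of _ "{#}"]) simp
next
  case (step i x)
  then obtain M where "\<forall>j\<in>#M. j \<ge> 1" "x = sum_mset (image_mset (gen a b n) M)" by blast
  with step show ?case by (intro exI[of _ "add_mset i M"]) auto
qed

lemma mset_Ssg: "(\<forall>j\<in>#M. j \<ge> 1) \<Longrightarrow> sum_mset (image_mset (gen a b n) M) \<in> Ssg a b n"
  by (induction M) (auto intro: Ssg.zero Ssg.step)

lemma mset_sum_count: "set_mset M \<subseteq> A \<Longrightarrow> finite A \<Longrightarrow>
   sum_mset (image_mset f M) = (\<Sum>j\<in>A. count M j * f j)"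
proof (induction M)
  case empty then show ?case by simp
next
  case (add x M)
  have "(\<Sum>j\<in>A. count (add_mset x M) j * f j) = (\<Sum>j\<in>A. count M j * f j + (if j = x then f j else 0))"
    by (rule sum.cong) auto
  also have "\<dots> = (\<Sum>j\<in>A. count M j * f j) + f x" using add.prems
    by (simp add: sum.distrib)
  finally show ?case using add by simp
qed

lemma norm:
  assumes a: "a > 0" and b: "b > 1" and w: "w \<in> Apery a b n"
  shows "\<exists>d. w = (\<Sum>j=2..n. d j * gen a b n j) \<and> ((\<forall>j\<in>{2..n}. d j = 0) \<or>
     (\<exists>i0\<in>{2..n}. (\<forall>j\<in>{2..n}. j < i0 \<longrightarrow> d j = 0) \<and> d i0 \<le> b \<and> (\<forall>j\<in>{2..n}. i0 < j \<longrightarrow> d j \<le> b - 1)))"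
proof -
  let ?g = "gen a b n"
  define P where "P M \<longleftrightarrow> (\<forall>j\<in>#M. j \<ge> 1) \<and> w = sum_mset (image_mset ?g M)" for M
  have wS: "w \<in> Ssg a b n" and wA: "\<not> (w \<ge> ?g 1 \<and> w - ?g 1 \<in> Ssg a b n)"
    using w by (auto simp: Apery_def)
  have no1: "1 \<notin># M" if "P M" for M
  proof
    assume "1 \<in># M"
    then obtain M' where M: "M = add_mset 1 M'" by (metis multi_member_split)
    with that have "w = ?g 1 + sum_mset (image_mset ?g M')" "\<forall>j\<in>#M'. j \<ge> 1" by (auto simp: P_def)
    with mset_Ssg[of M' a b n] wA show False by auto
  qed
  have len: "j \<le> n" if PM: "P M" and jM: "j \<in># M" for M j
  proof (rule ccontr)
    assume "\<not> j \<le> n"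
    then have jn: "j > n" by simp
    obtain M' where M: "M = add_mset j M'" using jM by (metis multi_member_split)
    with PM have w1: "w = ?g j + sum_mset (image_mset ?g M')" and M'1: "\<forall>j\<in>#M'. j \<ge> 1"
      by (auto simp: P_def)
    have "a * b^(j-n-1) \<ge> 1" using a b by simp
    then obtain c where c: "a * b^(j-n-1) = c + 1" by (metis le_add_diff_inverse2)
    have "w = ?g 1 + (?g (j - n) + c * ?g 1 + sum_mset (image_mset ?g M'))"
    proof -
      have "(a * b^(j-n-1)) * ?g 1 = ?g 1 + c * ?g 1" using c by simp
      then show ?thesis using gen_big[OF jn, of a b] w1 by simp
    qed
    moreover have "?g (j - n) + c * ?g 1 + sum_mset (image_mset ?g M') \<in> Ssg a b n"
      using jn by (intro Ssg_add gen_in mult_in mset_Ssg M'1) auto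
    ultimately show False using wA by auto
  qed
  show ?thesis
  proof (cases "w = 0")
    case True then show ?thesis by (intro exI[of _ "\<lambda>_. 0"]) simp
  next
    case False
    obtain M0 where PM0: "P M0" using Ssg_mset[OF wS] unfolding P_def by blast
    with False obtain k0 where k0: "k0 \<in># M0" by (cases M0) (auto simp: P_def)
    define i0 where "i0 = (LEAST k. \<exists>M. P M \<and> k \<in># M)"
    have ex: "\<exists>M. P M \<and> i0 \<in># M" unfolding i0_def
      by (rule LeastI[of _ k0]) (use PM0 k0 in blast)
    have least: "i0 \<le> k" if "P M'" "k \<in># M'" for M' k unfolding i0_def using that by (blast intro: Least_le)
    obtain M where PM: "P M" and i0M: "i0 \<in># M" using ex by blast
    have i0_2: "i0 \<ge> 2"
    proof -
      have "i0 \<ge> 1" using i0M PM by (simp add: P_def)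
      moreover have "i0 \<noteq> 1" using no1[OF PM] i0M by auto
      ultimately show ?thesis by simp
    qed
    have i0n: "i0 \<le> n" using len[OF PM i0M] .
    have setM: "set_mset M \<subseteq> {i0..n}" using least[OF PM] len[OF PM] by auto
    have bound: "count M j < b + (if j = i0 then 1 else 0)" if ji: "j \<ge> i0" for j
    proof (rule ccontr)
      assume "\<not> ?thesis"
      then have cj: "count M j \<ge> b + (if j = i0 then 1 else 0)" by simp
      define X where "X = replicate_mset b j + {#i0#}"
      have ci0: "count M i0 \<ge> 1" using i0M by (simp add: Suc_le_eq)
      have sub: "X \<subseteq># M" unfolding X_def subseteq_mset_def
      proof
        fix k show "count (replicate_mset b j + {#i0#}) k \<le> count M k"
          using cj ci0 by (cases "k = j"; cases "k = i0") auto
      qed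
      define M' where "M' = (M - X) + replicate_mset b (i0 - 1) + {#j + 1#}"
      have sX: "sum_mset (image_mset ?g X) = b * ?g j + ?g i0" by (simp add: X_def)
      have split: "sum_mset (image_mset ?g M) = sum_mset (image_mset ?g (M - X)) + sum_mset (image_mset ?g X)"
        using sub by (metis image_mset_union subset_mset.diff_add sum_mset.union add.commute)
      have "P M'" unfolding P_def
      proof
        show "\<forall>k\<in>#M'. 1 \<le> k" using PM i0_2 unfolding M'_def P_def by (auto dest: in_diffD)
        have "sum_mset (image_mset ?g M') = sum_mset (image_mset ?g (M - X)) + (b * ?g (i0 - 1) + ?g (j + 1))"
          by (simp add: M'_def)
        also have "\<dots> = sum_mset (image_mset ?g (M - X)) + (b * ?g j + ?g i0)"
          using gen_rel[OF i0_2, where j=j and a=a and b=b and n=n] ji i0_2 by simp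
        also have "\<dots> = w" using split sX PM by (simp add: P_def)
        finally show "w = sum_mset (image_mset ?g M')" by simp
      qed
      moreover have "i0 - 1 \<in># M'" using b by (simp add: M'_def)
      ultimately have "i0 \<le> i0 - 1" by (rule least)
      with i0_2 show False by simp
    qed
    have "w = (\<Sum>j=2..n. count M j * ?g j)"
      using PM setM i0_2 mset_sum_count[of M "{2..n}" ?g] unfolding P_def by force
    moreover have "\<forall>j\<in>{2..n}. j < i0 \<longrightarrow> count M j = 0" using setM by (auto simp: count_eq_zero_iff)
    moreover have "count M i0 \<le> b" using bound[of i0] by simp
    moreover have "\<forall>j\<in>{2..n}. i0 < j \<longrightarrow> count M j \<le> b - 1"
    proof (intro ballI impI)
      fix j assume "i0 < j"
      then have "count M j < b" using bound[of j] by simp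
      then show "count M j \<le> b - 1" by simp
    qed
    ultimately show ?thesis using i0_2 i0n by (intro exI[of _ "count M"]) auto
  qed
qed

definition nf :: "nat \<Rightarrow> (nat \<Rightarrow> nat) \<Rightarrow> nat \<Rightarrow> bool" where
  "nf b d m \<longleftrightarrow> (\<forall>j\<in>{2..m}. d j \<le> b \<and> (d j = b \<longrightarrow> (\<forall>k\<in>{2..<j}. d k = 0)))"

definition vl :: "nat \<Rightarrow> (nat \<Rightarrow> nat) \<Rightarrow> nat \<Rightarrow> nat" where
  "vl b d m = (\<Sum>j=2..m. d j * repunit b (j - 1))"

lemma vl_Suc: "m \<ge> 1 \<Longrightarrow> vl b d (Suc m) = vl b d m + d (Suc m) * repunit b m"
  unfolding vl_def by (simp add: sum.cl_ivl_Suc)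

lemma nf_Suc: "nf b d (Suc m) \<Longrightarrow> nf b d m"
  unfolding nf_def by auto

lemma vl_bound: "b \<ge> 1 \<Longrightarrow> m \<ge> 1 \<Longrightarrow> nf b d m \<Longrightarrow> vl b d m < repunit b m"
proof (induction m)
  case 0 then show ?case by simp
next
  case (Suc m)
  show ?case
  proof (cases "m = 0")
    case True then show ?thesis by (simp add: vl_def repunit_def)
  next
    case False
    then have m1: "m \<ge> 1" by simp
    have IH: "vl b d m < repunit b m" using Suc m1 nf_Suc by blast
    have dS: "d (Suc m) \<le> b" and dSb: "d (Suc m) = b \<Longrightarrow> (\<forall>k\<in>{2..<Suc m}. d k = 0)"
      using Suc.prems(3) m1 unfolding nf_def by auto
    show ?thesis
    proof (cases "d (Suc m) = b")
      case True
      then have "vl b d m = 0" using dSb unfolding vl_def by (auto intro!: sum.neutral)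
      then show ?thesis using True m1 by (simp add: vl_Suc repunit_Suc)
    next
      case False
      then have "d (Suc m) \<le> b - 1" using dS by simp
      then have h: "d (Suc m) * repunit b m \<le> (b - 1) * repunit b m" by (rule mult_le_mono1)
      have h2: "(b - 1) * repunit b m + repunit b m = b * repunit b m"
        using Suc.prems(1) by (cases b) auto
      have "vl b d m + d (Suc m) * repunit b m < b * repunit b m + 1" using h h2 IH by linarith
      then show ?thesis using m1 by (simp add: vl_Suc repunit_Suc)
    qed
  qed
qed

lemma nf_unique: "b \<ge> 1 \<Longrightarrow> m \<ge> 1 \<Longrightarrow> nf b d m \<Longrightarrow> nf b e m \<Longrightarrow> vl b d m = vl b e m \<Longrightarrow>
   \<forall>j\<in>{2..m}. d j = e j"
proof (induction m)
  case 0 then show ?case by simp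
next
  case (Suc m)
  show ?case
  proof (cases "m = 0")
    case True then show ?thesis by simp
  next
    case False
    then have m1: "m \<ge> 1" by simp
    have bd: "vl b d m < repunit b m" using vl_bound Suc.prems m1 nf_Suc by blast
    have be: "vl b e m < repunit b m" using vl_bound Suc.prems m1 nf_Suc by blast
    have Rp: "repunit b m > 0" using repunit_pos[OF m1, where b=b] by simp
    have eq: "vl b d m + d (Suc m) * repunit b m = vl b e m + e (Suc m) * repunit b m"
      using Suc.prems(5) m1 by (simp add: vl_Suc)
    have "(vl b d m + d (Suc m) * repunit b m) div repunit b m = d (Suc m)" using bd Rp by simp
    moreover have "(vl b e m + e (Suc m) * repunit b m) div repunit b m = e (Suc m)" using be Rp by simp
    ultimately have deS: "d (Suc m) = e (Suc m)" using eq by simp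
    then have "vl b d m = vl b e m" using eq by simp
    then have "\<forall>j\<in>{2..m}. d j = e j" using Suc m1 nf_Suc by blast
    then show ?thesis using deS by (auto simp: le_Suc_eq)
  qed
qed

lemma gsum: "(\<Sum>j=2..n. d j * gen a b n j) = (\<Sum>j=2..n. d j) * repunit b n + a * vl b d n"
  unfolding gen_def vl_def by (simp add: algebra_simps sum.distrib sum_distrib_left sum_distrib_right)

definition ed :: "nat \<Rightarrow> nat \<Rightarrow> nat \<Rightarrow> nat" where
  "ed b i j = (if j = i then b else if j > i then b - 1 else 0)"

lemma alpha_digits:
  assumes "b \<ge> 1" "i \<in> {2..n}"
  shows "alpha a b n i = (\<Sum>j=2..n. ed b i j * gen a b n j)"
proof -
  let ?g = "gen a b n"
  have "(\<Sum>j=2..n. ed b i j * ?g j) = (\<Sum>j=2..n. (if j = i then ?g j else 0) + (if i \<le> j then (b - 1) * ?g j else 0))"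
  proof (rule sum.cong)
    fix j show "ed b i j * ?g j = (if j = i then ?g j else 0) + (if i \<le> j then (b - 1) * ?g j else 0)"
    proof (cases "j = i")
      case True
      have "b * ?g j = ?g j + (b - 1) * ?g j" using assms(1) by (cases b) auto
      then show ?thesis using True by (simp add: ed_def)
    qed (auto simp: ed_def)
  qed simp
  also have "\<dots> = ?g i + (\<Sum>j=2..n. if i \<le> j then (b - 1) * ?g j else 0)"
    using assms(2) by (simp add: sum.distrib)
  also have "(\<Sum>j=2..n. if i \<le> j then (b - 1) * ?g j else 0) = (\<Sum>j\<in>{j\<in>{2..n}. i \<le> j}. (b - 1) * ?g j)"
    by (rule sum.inter_filter[symmetric]) simp
  also have "{j\<in>{2..n}. i \<le> j} = {i..n}" using assms(2) by auto
  finally show ?thesis by (simp add: alpha_def)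
qed

lemma nf_ed: "b > 1 \<Longrightarrow> i \<in> {2..n} \<Longrightarrow> nf b (ed b i) n"
  unfolding nf_def ed_def by auto

lemma nf_norm:
  assumes "b \<ge> 1"
    and "(\<forall>j\<in>{2..n}. d j = 0) \<or>
     (\<exists>i0\<in>{2..n}. (\<forall>j\<in>{2..n}. j < i0 \<longrightarrow> d j = 0) \<and> d i0 \<le> b \<and> (\<forall>j\<in>{2..n}. i0 < j \<longrightarrow> d j \<le> b - 1))"
  shows "nf b d n"
  using assms(2)
proof
  assume "\<forall>j\<in>{2..n}. d j = 0" then show ?thesis using assms(1) unfolding nf_def by auto
next
  assume "\<exists>i0\<in>{2..n}. (\<forall>j\<in>{2..n}. j < i0 \<longrightarrow> d j = 0) \<and> d i0 \<le> b \<and> (\<forall>j\<in>{2..n}. i0 < j \<longrightarrow> d j \<le> b - 1)"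
  then obtain i0 where i0: "i0 \<in> {2..n}" "\<forall>j\<in>{2..n}. j < i0 \<longrightarrow> d j = 0" "d i0 \<le> b"
    "\<forall>j\<in>{2..n}. i0 < j \<longrightarrow> d j \<le> b - 1" by blast
  show ?thesis unfolding nf_def
  proof
    fix j assume j: "j \<in> {2..n}"
    consider "j < i0" | "j = i0" | "j > i0" by linarith
    then show "d j \<le> b \<and> (d j = b \<longrightarrow> (\<forall>k\<in>{2..<j}. d k = 0))"
    proof cases
      case 1 then show ?thesis using i0 j assms(1) by auto
    next
      case 2 then show ?thesis using i0 j by auto
    next
      case 3 then have "d j \<le> b - 1" using i0 j by auto
      then show ?thesis using assms(1) by auto
    qed
  qed
qed

lemma reduce:
  assumes "n \<ge> 1" "s \<in> Ssg a b n"
  shows "\<exists>s' k. s' \<in> Apery a b n \<and> s = s' + k * gen a b n 1"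
  using assms(2)
proof (induction s rule: less_induct)
  case (less s)
  have r: "gen a b n 1 > 0" using repunit_pos[OF assms(1), where b=b] by (simp add: gen_def)
  show ?case
  proof (cases "s \<in> Apery a b n")
    case True then show ?thesis by (intro exI[of _ s] exI[of _ 0]) simp
  next
    case False
    then have "s \<ge> gen a b n 1" "s - gen a b n 1 \<in> Ssg a b n" using less.prems by (auto simp: Apery_def)
    moreover have "s - gen a b n 1 < s" using r calculation by simp
    ultimately obtain s' k where "s' \<in> Apery a b n" "s - gen a b n 1 = s' + k * gen a b n 1"
      using less.IH by blast
    then show ?thesis using \<open>s \<ge> gen a b n 1\<close>
      by (intro exI[of _ s'] exI[of _ "Suc k"]) simp
  qed
qed

lemma alpha_step:
  assumes "b \<ge> 1" "2 \<le> i" "i < n"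
  shows "alpha a b n i + a = alpha a b n (i + 1) + (b ^ n - 1)"
proof -
  let ?g = "gen a b n"
  let ?T = "(\<Sum>j=Suc i..n. (b - 1) * ?g j)"
  have A1: "alpha a b n i = ?g i + ((b - 1) * ?g i + ?T)"
    unfolding alpha_def using assms by (simp add: sum.atLeast_Suc_atMost)
  have A2: "alpha a b n (i + 1) = ?g (i + 1) + ?T" unfolding alpha_def by simp
  have R: "repunit b i = b * repunit b (i - 1) + 1" using assms(2) repunit_Suc[of b "i - 1"] by simp
  have G: "repunit b n * (b - 1) + 1 = b ^ n" using repunit_geom[OF assms(1)] .
  have B: "b ^ n - 1 = repunit b n * (b - 1)" using G by linarith
  have F1: "?g i + (b - 1) * ?g i = b * ?g i" using assms(1) by (cases b) auto
  have F2: "b * ?g i + a = ?g (i + 1) + repunit b n * (b - 1)"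
  proof -
    have "b * ?g i + a = b * repunit b n + a * (b * repunit b (i - 1) + 1)"
      by (simp add: gen_def algebra_simps)
    also have "\<dots> = b * repunit b n + a * repunit b i" using R by simp
    also have "b * repunit b n = repunit b n + repunit b n * (b - 1)" using assms(1) by (cases b) auto
    finally show ?thesis by (simp add: gen_def algebra_simps)
  qed
  show ?thesis using A1 A2 B F1 F2 by linarith
qed

theorem lemma21:
  fixes a b n :: nat
  assumes "a > 0" and "b > 1" and "n > 1" and "gcd (repunit b n) a = 1"
  shows "(\<forall>i\<in>{2..n}. alpha a b n i \<in> Apery a b n)
    \<and> (a < b ^ n - 1 \<longrightarrow> (\<forall>i. 2 \<le> i \<and> i < n \<longrightarrow> alpha a b n i > alpha a b n (i + 1)))
    \<and> (a > b ^ n - 1 \<longrightarrow> (\<forall>i. 2 \<le> i \<and> i < n \<longrightarrow> alpha a b n i < alpha a b n (i + 1)))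
    \<and> (\<forall>w\<in>Apery a b n. \<exists>i\<in>{2..n}. w \<le> alpha a b n i)"
proof -
  let ?g = "gen a b n"
  let ?r = "repunit b n"
  have b1: "b \<ge> 1" and n1: "n \<ge> 1" using assms by auto
  have r0: "?r > 0" using repunit_pos[OF n1, where b=b] by simp
  have g1: "?g 1 = ?r" by (simp add: gen_def)
  have cop: "coprime a ?r" using assms(4) by (simp add: coprime_iff_gcd_eq_1 gcd.commute)
  have partA: "alpha a b n i \<in> Apery a b n" if i: "i \<in> {2..n}" for i
  proof -
    have inS: "alpha a b n i \<in> Ssg a b n" unfolding alpha_def using i
      by (intro Ssg_add gen_in sum_in mult_in) auto
    have "\<not> (alpha a b n i \<ge> ?g 1 \<and> alpha a b n i - ?g 1 \<in> Ssg a b n)"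
    proof
      assume H: "alpha a b n i \<ge> ?g 1 \<and> alpha a b n i - ?g 1 \<in> Ssg a b n"
      obtain s' k where s': "s' \<in> Apery a b n" and sk: "alpha a b n i - ?g 1 = s' + k * ?g 1"
        using reduce[OF n1 conjunct2[OF H]] by blast
      obtain d where dw: "s' = (\<Sum>j=2..n. d j * ?g j)" and dn: "(\<forall>j\<in>{2..n}. d j = 0) \<or>
     (\<exists>i0\<in>{2..n}. (\<forall>j\<in>{2..n}. j < i0 \<longrightarrow> d j = 0) \<and> d i0 \<le> b \<and> (\<forall>j\<in>{2..n}. i0 < j \<longrightarrow> d j \<le> b - 1))"
        using norm[OF assms(1) assms(2) s'] by blast
      have nfd: "nf b d n" using nf_norm[OF b1 dn] .
      have nfe: "nf b (ed b i) n" using nf_ed[OF assms(2) i] .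
      define D where "D = (\<Sum>j=2..n. d j)"
      define E where "E = (\<Sum>j=2..n. ed b i j)"
      define vd where "vd = vl b d n"
      define ve where "ve = vl b (ed b i) n"
      have eqA: "alpha a b n i = E * ?r + a * ve"
        using alpha_digits[OF b1 i] gsum[where d="ed b i" and n=n and a=a and b=b] unfolding E_def ve_def by simp
      have eqS: "s' = D * ?r + a * vd" using dw gsum[where d=d and n=n and a=a and b=b] unfolding D_def vd_def by simp
      have tot: "E * ?r + a * ve = a * vd + (D + k + 1) * ?r"
      proof -
        have "alpha a b n i = s' + k * ?r + ?r" using conjunct1[OF H] sk g1 by simp
        then show ?thesis using eqA eqS by (simp add: algebra_simps)
      qed
      have vdb: "vd < ?r" unfolding vd_def using vl_bound[OF b1 n1 nfd] .
      have veb: "ve < ?r" unfolding ve_def using vl_bound[OF b1 n1 nfe] .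
      have "(a * ve) mod ?r = (E * ?r + a * ve) mod ?r" by simp
      also have "\<dots> = (a * vd + (D + k + 1) * ?r) mod ?r" using tot by simp
      also have "\<dots> = (a * vd) mod ?r" by (rule mod_mult_self1)
      finally have "[a * ve = a * vd] (mod ?r)" by (simp add: cong_def)
      then have "[ve = vd] (mod ?r)" using cong_mult_lcancel_nat[OF cop] by simp
      then have vv: "ve = vd" using vdb veb by (simp add: cong_def)
      then have "E * ?r = (D + k + 1) * ?r" using tot by simp
      then have ED: "E = D + k + 1" using r0 by (metis mult_right_cancel not_gr0)
      have "\<forall>j\<in>{2..n}. d j = ed b i j"
        using nf_unique[OF b1 n1 nfd nfe] vv unfolding vd_def ve_def by simp
      then have "D = E" unfolding D_def E_def by (intro sum.cong) auto
      with ED show False by simp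
    qed
    with inS show ?thesis by (simp add: Apery_def)
  qed
  have partB1: "alpha a b n i > alpha a b n (i + 1)" if "a < b ^ n - 1" "2 \<le> i" "i < n" for i
    using alpha_step[OF b1 that(2,3), of a] that(1) by linarith
  have partB2: "alpha a b n i < alpha a b n (i + 1)" if "a > b ^ n - 1" "2 \<le> i" "i < n" for i
    using alpha_step[OF b1 that(2,3), of a] that(1) by linarith
  have partC: "\<exists>i\<in>{2..n}. w \<le> alpha a b n i" if w: "w \<in> Apery a b n" for w
  proof -
    obtain d where dw: "w = (\<Sum>j=2..n. d j * ?g j)" and dn: "(\<forall>j\<in>{2..n}. d j = 0) \<or>
     (\<exists>i0\<in>{2..n}. (\<forall>j\<in>{2..n}. j < i0 \<longrightarrow> d j = 0) \<and> d i0 \<le> b \<and> (\<forall>j\<in>{2..n}. i0 < j \<longrightarrow> d j \<le> b - 1))"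
      using norm[OF assms(1) assms(2) w] by blast
    from dn show ?thesis
    proof
      assume "\<forall>j\<in>{2..n}. d j = 0"
      then have "w = 0" using dw by simp
      moreover have "(2::nat) \<in> {2..n}" using assms(3) by simp
      ultimately show ?thesis by blast
    next
      assume "\<exists>i0\<in>{2..n}. (\<forall>j\<in>{2..n}. j < i0 \<longrightarrow> d j = 0) \<and> d i0 \<le> b \<and> (\<forall>j\<in>{2..n}. i0 < j \<longrightarrow> d j \<le> b - 1)"
      then obtain i0 where i0: "i0 \<in> {2..n}" "\<forall>j\<in>{2..n}. j < i0 \<longrightarrow> d j = 0" "d i0 \<le> b"
        "\<forall>j\<in>{2..n}. i0 < j \<longrightarrow> d j \<le> b - 1" by blast
      have "w \<le> (\<Sum>j=2..n. ed b i0 j * ?g j)" unfolding dw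
      proof (rule sum_mono)
        fix j assume j: "j \<in> {2..n}"
        have "d j \<le> ed b i0 j" using i0 j unfolding ed_def by auto
        then show "d j * ?g j \<le> ed b i0 j * ?g j" by (rule mult_le_mono1)
      qed
      also have "\<dots> = alpha a b n i0" using alpha_digits[OF b1 i0(1)] by simp
      finally show ?thesis using i0(1) by blast
    qed
  qed
  show ?thesis using partA partB1 partB2 partC by blast
qed

end
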